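(* Assume the Nested Logit model without outside option described in the context satisfies Assumptions 1 and 2, and suppose the true choice probabilities $\phi(i,S)$ are known for all $S \in \mathcal{S} \cup \{[n]\}$ and $i \in S$ (so all boost factors are known exactly). Then the matrix $E$ returned by Algorithm 2 (described in the context) satisfies $E[i,j] = \mathbf{1}(N(i) = N(j))$ for all $i \neq j$ in $[n]$, except possibly when $|N(i)| = |N(j)| = 1$, in which case $E[i,j]$ may equal $1$.
   Context: Items: $[n]=\{1,\dots,n\}$ with $n\ge 2$. Experiment design: fix an integer base $b \ge 2$, let $L = \lceil \log_b n \rceil$, fix an injective map $\sigma: [n] \to \{0,\dots,b-1\}^L$ with coordinates $\sigma_\ell(i)$, let $S_{\ell,-d} = \{i \in [n] : \sigma_\ell(i) \neq d\}$ for $\ell \in \{1,\dots,L\}$, $d \in \{0,\dots,b-1\}$, and $\mathcal{S} = \{S_{\ell,-d}\}_{\ell,d}$; the control assortment $[n]$ is also offered. Nested Logit model without outside option: $\mathcal{N}$ is a partition of $[n]$ into nests, $N(i)$ the nest containing $i$; weights $v_i > 0$; parameters $\lambda_N \in [0,1]$, with an extra weight $v_N>0$ when $\lambda_N=0$. $v_N(S) = (\sum_{i \in N \cap S} v_i)^{\lambda_N}$ if $\lambda_N \in (0,1]$, $v_N(S) = v_N \mathbf{1}(N \cap S \neq \emptyset)$ if $\lambda_N = 0$. For $i \in S$, $\phi(i,S) = \frac{v_{N(i)}(S)}{\sum_{N \in \mathcal{N}} v_N(S)} \cdot \frac{v_i}{\sum_{j \in N(i) \cap S} v_j}$. Boost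 factor: $\mathsf{BF}(i,S) = \phi(i,S)/\phi(i,[n])$. Multiplier: $\mathsf{Mult}(N,S) = \left(\frac{\sum_{j \in N} v_j}{\sum_{j \in N \cap S} v_j}\right)^{1-\lambda_N}$. Assumption 1: $\lambda_N = 1$ iff $|N| = 1$. Assumption 2: for every $S \in \mathcal{S}$ and distinct nests $N \neq N'$ with $\emptyset \neq N \cap S \neq N$ and $\emptyset \neq N' \cap S \neq N'$, $\mathsf{Mult}(N,S) \neq \mathsf{Mult}(N',S)$. Algorithm 2 maintains a symmetric matrix $E$ with entries $E[i,j] \in \{0,1,\text{null}\}$ for $i \neq j$ (every assignment to $E[i,j]$ is also made to $E[j,i]$), initially all null. (1) For each $S \in \mathcal{S}$ and each pair of distinct $i,j \in S$: if $\mathsf{BF}(i,S) \neq \mathsf{BF}(j,S)$ set $E[i,j] \gets 0$; else if $\mathsf{BF}(i,S) = \mathsf{BF}(j,S) > \min_{k \in S} \mathsf{BF}(k,S)$ set $E[i,j] \gets 1$. (2) For each $S \in \mathcal{S}$ in turn (any order), let $\mathsf{minBF}(S) = \arg\min_{k \in S}\mathsf{BF}(k,S)$; if $E[i,j] = 0$ for some distinct $i,j \in \mathsf{minBF}(S)$, set $E[i,k] \gets 0$ for all $i \in \mathsf{minBF}(S)$ and all $k \notin S$; otherwise set $E[i,j] \gets 1$ for all distinct $i,j \in \mathsf{minBF}(S)$. (3) One-hop transitivity: compute the set of pairs $(i,j)$ with $E[i,j] = \text{null}$ for which some $k \notin \{i,j\}$ has $E[i,k] = E[j,k] = 1$, and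 set all these entries to $1$. (4) Identify missing pairs: compute the set of pairs $(i,j)$ with $E[i,j] = \text{null}$ such that $E[i,k] \neq 1$ and $E[j,k] \neq 1$ for all $k \notin \{i,j\}$, and set all these entries to $1$. (5) Set every remaining null entry to $0$ and return $E$. *)

theory Defs
  imports Complex_Main "HOL-Library.Disjoint_Sets"
begin

text \<open>Items are [n] = {1..n}. The digit map sigma is given by its coordinates:
  sigma i l is the l-th digit (l in {1..L}) of item i.\<close>

definition numL :: "nat \<Rightarrow> nat \<Rightarrow> nat" where
  "numL b n = nat \<lceil>log (real b) (real n)\<rceil>"

definition valid_code :: "nat \<Rightarrow> nat \<Rightarrow> (nat \<Rightarrow> nat \<Rightarrow> nat) \<Rightarrow> bool" where
  "valid_code n b sigma \<longleftrightarrow>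
     (\<forall>i\<in>{1..n}. \<forall>l\<in>{1..numL b n}. sigma i l < b) \<and>
     (\<forall>i\<in>{1..n}. \<forall>j\<in>{1..n}. (\<forall>l\<in>{1..numL b n}. sigma i l = sigma j l) \<longrightarrow> i = j)"

definition Sdig :: "nat \<Rightarrow> (nat \<Rightarrow> nat \<Rightarrow> nat) \<Rightarrow> nat \<Rightarrow> nat \<Rightarrow> nat set" where
  "Sdig n sigma l d = {i \<in> {1..n}. sigma i l \<noteq> d}"

definition design :: "nat \<Rightarrow> nat \<Rightarrow> (nat \<Rightarrow> nat \<Rightarrow> nat) \<Rightarrow> nat set set" where
  "design n b sigma = {Sdig n sigma l d | l d. l \<in> {1..numL b n} \<and> d < b}"

definition nest_of :: "nat set set \<Rightarrow> nat \<Rightarrow> nat set" where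
  "nest_of Ns i = (THE N. N \<in> Ns \<and> i \<in> N)"

definition nest_val :: "(nat \<Rightarrow> real) \<Rightarrow> (nat set \<Rightarrow> real) \<Rightarrow> (nat set \<Rightarrow> real)
     \<Rightarrow> nat set \<Rightarrow> nat set \<Rightarrow> real" where
  "nest_val v lam vN N S =
     (if lam N = 0 then (if N \<inter> S \<noteq> {} then vN N else 0)
      else (\<Sum>j\<in>N \<inter> S. v j) powr lam N)"

definition phi :: "nat set set \<Rightarrow> (nat \<Rightarrow> real) \<Rightarrow> (nat set \<Rightarrow> real) \<Rightarrow> (nat set \<Rightarrow> real)
     \<Rightarrow> nat \<Rightarrow> nat set \<Rightarrow> real" where
  "phi Ns v lam vN i S =
     nest_val v lam vN (nest_of Ns i) S / (\<Sum>N\<in>Ns. nest_val v lam vN N S)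
     * (v i / (\<Sum>j\<in>nest_of Ns i \<inter> S. v j))"

definition BF :: "nat \<Rightarrow> nat set set \<Rightarrow> (nat \<Rightarrow> real) \<Rightarrow> (nat set \<Rightarrow> real) \<Rightarrow> (nat set \<Rightarrow> real)
     \<Rightarrow> nat \<Rightarrow> nat set \<Rightarrow> real" where
  "BF n Ns v lam vN i S = phi Ns v lam vN i S / phi Ns v lam vN i {1..n}"

definition Mult :: "(nat \<Rightarrow> real) \<Rightarrow> (nat set \<Rightarrow> real) \<Rightarrow> nat set \<Rightarrow> nat set \<Rightarrow> real" where
  "Mult v lam N S = ((\<Sum>j\<in>N. v j) / (\<Sum>j\<in>N \<inter> S. v j)) powr (1 - lam N)"

text \<open>Matrix entries: None = null, Some True = 1, Some False = 0.\<close>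
type_synonym emat = "nat \<Rightarrow> nat \<Rightarrow> bool option"

definition minBF :: "(nat \<Rightarrow> nat set \<Rightarrow> real) \<Rightarrow> nat set \<Rightarrow> nat set" where
  "minBF bf S = {k \<in> S. bf k S = Min ((\<lambda>k. bf k S) ` S)}"

definition step1_one :: "(nat \<Rightarrow> nat set \<Rightarrow> real) \<Rightarrow> nat set \<Rightarrow> emat \<Rightarrow> emat" where
  "step1_one bf S E = (\<lambda>a c.
     if a \<in> S \<and> c \<in> S \<and> a \<noteq> c then
       (if bf a S \<noteq> bf c S then Some False
        else if bf a S > Min ((\<lambda>k. bf k S) ` S) then Some True
        else E a c)
     else E a c)"

definition step2_one :: "nat \<Rightarrow> (nat \<Rightarrow> nat set \<Rightarrow> real) \<Rightarrow> nat set \<Rightarrow> emat \<Rightarrow> emat" where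
  "step2_one n bf S E =
     (let M = minBF bf S in
      if \<exists>i\<in>M. \<exists>j\<in>M. i \<noteq> j \<and> E i j = Some False then
        (\<lambda>a c. if (a \<in> M \<and> c \<in> {1..n} - S) \<or> (c \<in> M \<and> a \<in> {1..n} - S) then Some False
               else E a c)
      else
        (\<lambda>a c. if a \<in> M \<and> c \<in> M \<and> a \<noteq> c then Some True else E a c))"

definition step3 :: "nat \<Rightarrow> emat \<Rightarrow> emat" where
  "step3 n E = (\<lambda>a c.
     if a \<in> {1..n} \<and> c \<in> {1..n} \<and> a \<noteq> c \<and> E a c = None \<and>
        (\<exists>k\<in>{1..n}. k \<noteq> a \<and> k \<noteq> c \<and> E a k = Some True \<and> E c k = Some True)
     then Some True else E a c)"

definition step4 :: "nat \<Rightarrow> emat \<Rightarrow> emat" where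
  "step4 n E = (\<lambda>a c.
     if a \<in> {1..n} \<and> c \<in> {1..n} \<and> a \<noteq> c \<and> E a c = None \<and>
        (\<forall>k\<in>{1..n}. k \<noteq> a \<and> k \<noteq> c \<longrightarrow> E a k \<noteq> Some True \<and> E c k \<noteq> Some True)
     then Some True else E a c)"

definition step5 :: "nat \<Rightarrow> emat \<Rightarrow> emat" where
  "step5 n E = (\<lambda>a c.
     if a \<in> {1..n} \<and> c \<in> {1..n} \<and> a \<noteq> c \<and> E a c = None then Some False else E a c)"

text \<open>Algorithm 2: ord1 / ord2 are the orders in which the assortments of the design
  are processed in steps (1) and (2) (lists enumerating the design).\<close>
definition algorithm2 :: "nat \<Rightarrow> (nat \<Rightarrow> nat set \<Rightarrow> real) \<Rightarrow> nat set list \<Rightarrow> nat set list \<Rightarrow> emat" where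
  "algorithm2 n bf ord1 ord2 =
     (let E1 = fold (step1_one bf) ord1 (\<lambda>_ _. None);
          E2 = fold (step2_one n bf) ord2 E1
      in step5 n (step4 n (step3 n E2)))"

end

theory Submission
  imports Defs
begin

lemma fold_inv:
  assumes "\<forall>x\<in>set xs. \<forall>E. P E \<longrightarrow> P (f x E)" and "P E0"
  shows "P (fold f xs E0)"
  using assms by (induction xs arbitrary: E0) auto

lemma fold_Q:
  assumes "\<forall>x\<in>set xs. \<forall>E. P E \<longrightarrow> P (f x E)"
    and "\<forall>x\<in>set xs. \<forall>E. P E \<longrightarrow> Q E \<longrightarrow> Q (f x E)"
    and "xz \<in> set xs" and "\<forall>E. P E \<longrightarrow> Q (f xz E)" and "P E0"
  shows "Q (fold f xs E0)"
  using assms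
proof (induction xs arbitrary: E0)
  case Nil then show ?case by simp
next
  case (Cons y ys)
  show ?case
  proof (cases "xz = y")
    case True
    have "P (f y E0) \<and> Q (f y E0)" using Cons.prems True by auto
    moreover have "\<forall>x\<in>set ys. \<forall>E. (P E \<and> Q E) \<longrightarrow> (P (f x E) \<and> Q (f x E))" using Cons.prems by auto
    ultimately have "P (fold f ys (f y E0)) \<and> Q (fold f ys (f y E0))"
      using fold_inv[of ys "\<lambda>E. P E \<and> Q E" f] by blast
    then show ?thesis by simp
  next
    case False
    then have "xz \<in> set ys" using Cons.prems by auto
    moreover have "P (f y E0)" using Cons.prems by auto
    ultimately have "Q (fold f ys (f y E0))" using Cons.IH[of "f y E0"] Cons.prems by auto
    then show ?thesis by simp
  qed
qed

locale nl_setup =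
  fixes n b :: nat and sigma :: "nat \<Rightarrow> nat \<Rightarrow> nat"
    and Ns :: "nat set set" and v :: "nat \<Rightarrow> real"
    and lam vN :: "nat set \<Rightarrow> real"
  assumes code: "valid_code n b sigma"
    and part: "partition_on {1..n} Ns"
    and vpos: "\<forall>i\<in>{1..n}. v i > 0"
    and lam_range: "\<forall>N\<in>Ns. 0 \<le> lam N \<and> lam N \<le> 1"
    and vNpos: "\<forall>N\<in>Ns. lam N = 0 \<longrightarrow> vN N > 0"
    and A1: "\<forall>N\<in>Ns. lam N = 1 \<longleftrightarrow> card N = 1"
    and A2: "\<forall>S\<in>design n b sigma. \<forall>N\<in>Ns. \<forall>N'\<in>Ns.
               N \<noteq> N' \<and> N \<inter> S \<noteq> {} \<and> N \<inter> S \<noteq> N \<and> N' \<inter> S \<noteq> {} \<and> N' \<inter> S \<noteq> N'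
               \<longrightarrow> Mult v lam N S \<noteq> Mult v lam N' S"
begin

abbreviation nst where "nst x \<equiv> nest_of Ns x"
abbreviation bf where "bf \<equiv> BF n Ns v lam vN"
abbreviation VV where "VV A \<equiv> (\<Sum>j\<in>A. v j)"

lemma Ns_sub: "N \<in> Ns \<Longrightarrow> N \<subseteq> {1..n}"
  using partition_onD1[OF part] by blast

lemma Ns_ne: "N \<in> Ns \<Longrightarrow> N \<noteq> {}"
  using partition_onD3[OF part] by blast

lemma Ns_fin: "finite Ns"
  using finite_elements[OF _ part] by simp

lemma N_fin: "N \<in> Ns \<Longrightarrow> finite N"
  using Ns_sub finite_subset by blast

lemma nest_unique: "N \<in> Ns \<Longrightarrow> x \<in> N \<Longrightarrow> nst x = N"
proof -
  assume a: "N \<in> Ns" "x \<in> N"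
  have d: "disjoint Ns" using partition_onD2[OF part] .
  show ?thesis unfolding nest_of_def
    by (rule the_equality) (use a d in \<open>auto simp: disjoint_def\<close>)
qed

lemma nest_in: "x \<in> {1..n} \<Longrightarrow> nst x \<in> Ns \<and> x \<in> nst x"
proof -
  assume "x \<in> {1..n}"
  then obtain N where "N \<in> Ns" "x \<in> N" using partition_onD1[OF part] by blast
  then show ?thesis using nest_unique by simp
qed

lemma same_nest: "x \<in> {1..n} \<Longrightarrow> y \<in> nst x \<Longrightarrow> nst y = nst x"
  using nest_in nest_unique by blast

lemma design_sub: "S \<in> design n b sigma \<Longrightarrow> S \<subseteq> {1..n}"
  unfolding design_def Sdig_def by auto

lemma Sdig_in: "l \<in> {1..numL b n} \<Longrightarrow> d < b \<Longrightarrow> Sdig n sigma l d \<in> design n b sigma"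
  unfolding design_def by blast

lemma digit_lt: "x \<in> {1..n} \<Longrightarrow> l \<in> {1..numL b n} \<Longrightarrow> sigma x l < b"
  using code unfolding valid_code_def by blast

lemma digit_diff: "x \<in> {1..n} \<Longrightarrow> y \<in> {1..n} \<Longrightarrow> x \<noteq> y \<Longrightarrow> \<exists>l\<in>{1..numL b n}. sigma x l \<noteq> sigma y l"
  using code unfolding valid_code_def by blast

lemma Sdig_mem: "x \<in> Sdig n sigma l d \<longleftrightarrow> x \<in> {1..n} \<and> sigma x l \<noteq> d"
  unfolding Sdig_def by auto


definition ZZ where "ZZ S = (\<Sum>N\<in>Ns. nest_val v lam vN N S)"

lemma VV_pos: "A \<subseteq> {1..n} \<Longrightarrow> A \<noteq> {} \<Longrightarrow> VV A > 0"
proof -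
  assume a: "A \<subseteq> {1..n}" "A \<noteq> {}"
  have "finite A" using a finite_subset by blast
  then show ?thesis using a vpos by (intro sum_pos) auto
qed

lemma nv_nonneg: "N \<in> Ns \<Longrightarrow> nest_val v lam vN N S \<ge> 0"
  using vNpos unfolding nest_val_def by auto

lemma nv_pos: "N \<in> Ns \<Longrightarrow> N \<inter> S \<noteq> {} \<Longrightarrow> nest_val v lam vN N S > 0"
proof -
  assume a: "N \<in> Ns" "N \<inter> S \<noteq> {}"
  have "VV (N \<inter> S) > 0" using a Ns_sub by (intro VV_pos) auto
  then show ?thesis using a vNpos unfolding nest_val_def by auto
qed

lemma ZZ_pos: "x \<in> S \<Longrightarrow> S \<subseteq> {1..n} \<Longrightarrow> ZZ S > 0"
proof -
  assume a: "x \<in> S" "S \<subseteq> {1..n}"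
  then have N: "nst x \<in> Ns" "x \<in> nst x" using nest_in by auto
  have "0 < nest_val v lam vN (nst x) S" using N a by (intro nv_pos) auto
  also have "\<dots> \<le> ZZ S" unfolding ZZ_def
    using N Ns_fin nv_nonneg by (intro member_le_sum) auto
  finally show ?thesis .
qed

lemma bf_formula: "x \<in> S \<Longrightarrow> S \<subseteq> {1..n} \<Longrightarrow>
   bf x S = (ZZ {1..n} / ZZ S) * Mult v lam (nst x) S"
proof -
  assume a: "x \<in> S" "S \<subseteq> {1..n}"
  define N where "N = nst x"
  have N: "N \<in> Ns" "x \<in> N" using nest_in a N_def by auto
  have NS: "N \<inter> {1..n} = N" using Ns_sub N by auto
  have ZS: "ZZ S > 0" using ZZ_pos a by auto
  have Zn: "ZZ {1..n} > 0" using ZZ_pos a by auto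
  have VS: "VV (N \<inter> S) > 0" using a N Ns_sub by (intro VV_pos) auto
  have VN: "VV N > 0" using N Ns_sub by (intro VV_pos) auto
  have vx: "v x > 0" using a vpos by auto
  have l: "0 \<le> lam N" "lam N \<le> 1" using lam_range N by auto
  have phiS: "phi Ns v lam vN x S = nest_val v lam vN N S / ZZ S * (v x / VV (N \<inter> S))"
    unfolding phi_def ZZ_def N_def by simp
  have phin: "phi Ns v lam vN x {1..n} = nest_val v lam vN N {1..n} / ZZ {1..n} * (v x / VV N)"
    unfolding phi_def ZZ_def N_def using NS by (simp add: N_def)
  show ?thesis
  proof (cases "lam N = 0")
    case True
    have w: "vN N > 0" using vNpos N True by auto
    have e1: "nest_val v lam vN N S = vN N" using True N a unfolding nest_val_def by auto
    have e2: "nest_val v lam vN N {1..n} = vN N" using True N a NS unfolding nest_val_def by auto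
    have m: "Mult v lam N S = VV N / VV (N \<inter> S)" unfolding Mult_def using True VS VN by simp
    show ?thesis unfolding BF_def phiS phin e1 e2 N_def[symmetric] m
      using w ZS Zn VS VN vx by (simp add: field_simps)
  next
    case False
    have e1: "nest_val v lam vN N S = VV (N \<inter> S) powr lam N" using False unfolding nest_val_def by auto
    have e2: "nest_val v lam vN N {1..n} = VV N powr lam N" using False NS unfolding nest_val_def by auto
    have m: "Mult v lam N S = (VV N powr 1 / VV N powr lam N) / (VV (N \<inter> S) powr 1 / VV (N \<inter> S) powr lam N)"
      unfolding Mult_def using VS VN by (simp add: powr_divide powr_diff)
    have p1: "VV N powr lam N > 0" "VV (N \<inter> S) powr lam N > 0" using VS VN by auto
    show ?thesis unfolding BF_def phiS phin e1 e2 N_def[symmetric] m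
      using p1 ZS Zn VS VN vx by (simp add: field_simps)
  qed
qed

lemma VV_le: "N \<in> Ns \<Longrightarrow> VV (N \<inter> S) \<le> VV N"
proof -
  assume N: "N \<in> Ns"
  have "finite N" using N N_fin by auto
  then show ?thesis using N Ns_sub vpos by (intro sum_mono2) (auto intro: less_imp_le)
qed

lemma VV_lt: "N \<in> Ns \<Longrightarrow> \<not> N \<subseteq> S \<Longrightarrow> VV (N \<inter> S) < VV N"
proof -
  assume N: "N \<in> Ns" "\<not> N \<subseteq> S"
  have f: "finite N" using N N_fin by auto
  have "VV N = VV (N \<inter> S) + VV (N - S)"
    using f sum.Int_Diff by blast
  moreover have "VV (N - S) > 0" using N Ns_sub by (intro VV_pos) auto
  ultimately show ?thesis by simp
qed

lemma mult_ge1: "N \<in> Ns \<Longrightarrow> N \<inter> S \<noteq> {} \<Longrightarrow> Mult v lam N S \<ge> 1"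
proof -
  assume N: "N \<in> Ns" "N \<inter> S \<noteq> {}"
  have VS: "VV (N \<inter> S) > 0" using N Ns_sub by (intro VV_pos) auto
  have "VV N / VV (N \<inter> S) \<ge> 1" using VS VV_le[OF N(1)] by simp
  moreover have "1 - lam N \<ge> 0" using lam_range N by auto
  ultimately show ?thesis unfolding Mult_def by (simp add: ge_one_powr_ge_zero)
qed

lemma mult_eq1: "N \<in> Ns \<Longrightarrow> N \<subseteq> S \<Longrightarrow> Mult v lam N S = 1"
proof -
  assume N: "N \<in> Ns" "N \<subseteq> S"
  have "N \<inter> S = N" using N by auto
  moreover have "VV N > 0" using N Ns_sub Ns_ne by (intro VV_pos) auto
  ultimately show ?thesis unfolding Mult_def by simp
qed

lemma mult_gt1: "N \<in> Ns \<Longrightarrow> N \<inter> S \<noteq> {} \<Longrightarrow> \<not> N \<subseteq> S \<Longrightarrow> Mult v lam N S > 1"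
proof -
  assume N: "N \<in> Ns" "N \<inter> S \<noteq> {}" "\<not> N \<subseteq> S"
  have VS: "VV (N \<inter> S) > 0" using N Ns_sub by (intro VV_pos) auto
  have r: "VV N / VV (N \<inter> S) > 1" using VS VV_lt[OF N(1) N(3)] by simp
  have "card N \<noteq> 1" using N by (auto simp: card_Suc_eq)
  then have "lam N \<noteq> 1" using A1 N by auto
  then have "1 - lam N > 0" using lam_range N by auto
  then show ?thesis unfolding Mult_def using r by simp
qed

lemma c_pos: "x \<in> S \<Longrightarrow> S \<subseteq> {1..n} \<Longrightarrow> ZZ {1..n} / ZZ S > 0"
proof -
  assume a: "x \<in> S" "S \<subseteq> {1..n}"
  have "ZZ S > 0" using ZZ_pos a by auto
  moreover have "ZZ {1..n} > 0" using ZZ_pos[of x "{1..n}"] a by auto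
  ultimately show ?thesis by simp
qed

definition cc where "cc S = ZZ {1..n} / ZZ S"

lemma bf_c: "x \<in> S \<Longrightarrow> S \<subseteq> {1..n} \<Longrightarrow> bf x S = cc S * Mult v lam (nst x) S"
  unfolding cc_def using bf_formula by simp

lemma cc_pos: "x \<in> S \<Longrightarrow> S \<subseteq> {1..n} \<Longrightarrow> cc S > 0"
  unfolding cc_def using c_pos by simp

lemma bf_same: "x \<in> S \<Longrightarrow> y \<in> S \<Longrightarrow> S \<subseteq> {1..n} \<Longrightarrow> nst x = nst y \<Longrightarrow> bf x S = bf y S"
  using bf_formula by metis

lemma bf_full_lt: "x \<in> S \<Longrightarrow> y \<in> S \<Longrightarrow> S \<subseteq> {1..n} \<Longrightarrow> nst y \<subseteq> S \<Longrightarrow> \<not> nst x \<subseteq> S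
   \<Longrightarrow> bf y S < bf x S"
proof -
  assume a: "x \<in> S" "y \<in> S" "S \<subseteq> {1..n}" "nst y \<subseteq> S" "\<not> nst x \<subseteq> S"
  have c: "cc S > 0" using cc_pos a by auto
  have Nx: "nst x \<in> Ns" "x \<in> nst x" using nest_in a by auto
  have Ny: "nst y \<in> Ns" using nest_in a by auto
  have "Mult v lam (nst y) S = 1" using mult_eq1 Ny a by auto
  moreover have "Mult v lam (nst x) S > 1" using mult_gt1 Nx a by auto
  ultimately show ?thesis using bf_c[OF a(1) a(3)] bf_c[OF a(2) a(3)] c by simp
qed

lemma bf_diff: "S \<in> design n b sigma \<Longrightarrow> x \<in> S \<Longrightarrow> y \<in> S \<Longrightarrow> nst x \<noteq> nst y \<Longrightarrow> \<not> nst x \<subseteq> S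
   \<Longrightarrow> bf x S \<noteq> bf y S"
proof -
  assume a: "S \<in> design n b sigma" "x \<in> S" "y \<in> S" "nst x \<noteq> nst y" "\<not> nst x \<subseteq> S"
  have Sn: "S \<subseteq> {1..n}" using design_sub a by auto
  show ?thesis
  proof (cases "nst y \<subseteq> S")
    case True
    then show ?thesis using bf_full_lt[OF a(2) a(3) Sn True a(5)] by simp
  next
    case False
    have c: "cc S > 0" using cc_pos a Sn by auto
    have Nx: "nst x \<in> Ns" "x \<in> nst x" using nest_in a Sn by auto
    have Ny: "nst y \<in> Ns" "y \<in> nst y" using nest_in a Sn by auto
    have "Mult v lam (nst x) S \<noteq> Mult v lam (nst y) S"
      using A2 a(1) Nx Ny a(2-5) False by blast
    then show ?thesis using bf_c[OF a(2) Sn] bf_c[OF a(3) Sn] c by simp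
  qed
qed

lemma bf_min_le: "S \<subseteq> {1..n} \<Longrightarrow> x \<in> S \<Longrightarrow> Min ((\<lambda>k. bf k S) ` S) \<le> bf x S"
  using finite_subset[of S "{1..n}"] by (intro Min_le) auto

lemma bf_full_min: "S \<subseteq> {1..n} \<Longrightarrow> x \<in> S \<Longrightarrow> nst x \<subseteq> S \<Longrightarrow> bf x S = Min ((\<lambda>k. bf k S) ` S)"
proof -
  assume a: "S \<subseteq> {1..n}" "x \<in> S" "nst x \<subseteq> S"
  have fin: "finite S" using a finite_subset by blast
  have "\<forall>k\<in>S. bf x S \<le> bf k S"
  proof
    fix k assume k: "k \<in> S"
    have c: "cc S > 0" using cc_pos a by auto
    have Nx: "nst x \<in> Ns" using nest_in a by auto
    have Nk: "nst k \<in> Ns" "k \<in> nst k" using nest_in a k by auto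
    have "Mult v lam (nst x) S = 1" using mult_eq1 Nx a by auto
    moreover have "Mult v lam (nst k) S \<ge> 1" using mult_ge1 Nk k by auto
    ultimately show "bf x S \<le> bf k S" using bf_c[OF a(2) a(1)] bf_c[OF k a(1)] c by simp
  qed
  then have "bf x S \<le> Min ((\<lambda>k. bf k S) ` S)" using a fin by (intro Min.boundedI) auto
  then show ?thesis using bf_min_le[OF a(1) a(2)] by simp
qed

lemma bf_eq_partial: "S \<in> design n b sigma \<Longrightarrow> x \<in> S \<Longrightarrow> y \<in> S \<Longrightarrow> \<not> nst x \<subseteq> S
   \<Longrightarrow> bf y S = bf x S \<Longrightarrow> nst y = nst x"
  using bf_diff by metis

lemma card1_eq: "k \<in> {1..n} \<Longrightarrow> card (nst k) = 1 \<Longrightarrow> a \<in> nst k \<Longrightarrow> a = k"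
  using nest_in by (metis card_1_singletonE singletonD)

lemma other_in_nest: "i \<in> {1..n} \<Longrightarrow> card (nst i) \<noteq> 1 \<Longrightarrow> \<exists>k\<in>nst i. k \<noteq> i"
proof -
  assume a: "i \<in> {1..n}" "card (nst i) \<noteq> 1"
  have "i \<in> nst i" using nest_in a by auto
  show ?thesis
  proof (rule ccontr)
    assume "\<not> ?thesis"
    then have "nst i = {i}" using \<open>i \<in> nst i\<close> by auto
    then show False using a by simp
  qed
qed

definition sound :: "emat \<Rightarrow> bool" where
  "sound E \<longleftrightarrow> (\<forall>a\<in>{1..n}. \<forall>c\<in>{1..n}. a \<noteq> c \<longrightarrow>
     (E a c = Some False \<longrightarrow> nst a \<noteq> nst c) \<and>
     (E a c = Some True \<longrightarrow> nst a = nst c \<or> (card (nst a) = 1 \<and> card (nst c) = 1)))"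

definition symm :: "emat \<Rightarrow> bool" where
  "symm E \<longleftrightarrow> (\<forall>a c. E a c = E c a)"

lemma sound_true: "sound E \<Longrightarrow> a \<in> {1..n} \<Longrightarrow> c \<in> {1..n} \<Longrightarrow> a \<noteq> c \<Longrightarrow> nst a = nst c \<Longrightarrow>
  E a c \<noteq> None \<Longrightarrow> E a c = Some True"
  unfolding sound_def by (metis (full_types) option.exhaust)

lemma sound_false: "sound E \<Longrightarrow> a \<in> {1..n} \<Longrightarrow> c \<in> {1..n} \<Longrightarrow> a \<noteq> c \<Longrightarrow> nst a \<noteq> nst c \<Longrightarrow>
  card (nst a) \<noteq> 1 \<or> card (nst c) \<noteq> 1 \<Longrightarrow>
  E a c \<noteq> None \<Longrightarrow> E a c = Some False"
  unfolding sound_def by (metis (full_types) option.exhaust)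

lemma step1_sound: "S \<in> design n b sigma \<Longrightarrow> sound E \<Longrightarrow> sound (step1_one bf S E)"
proof -
  assume S: "S \<in> design n b sigma" and E: "sound E"
  have Sn: "S \<subseteq> {1..n}" using design_sub S by auto
  show ?thesis unfolding sound_def
  proof (intro ballI impI conjI)
    fix a c assume ac: "a \<in> {1..n}" "c \<in> {1..n}" "a \<noteq> c"
    {
      assume h: "step1_one bf S E a c = Some False"
      show "nst a \<noteq> nst c"
      proof
        assume eq: "nst a = nst c"
        show False
        proof (cases "a \<in> S \<and> c \<in> S")
          case True
          then have "bf a S = bf c S" using bf_same Sn eq by auto
          then have "step1_one bf S E a c = E a c \<or> step1_one bf S E a c = Some True"
            using True unfolding step1_one_def by auto
          then show False using h E ac eq unfolding sound_def by auto
        next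
          case False
          then have "step1_one bf S E a c = E a c" unfolding step1_one_def by auto
          then show False using h E ac eq unfolding sound_def by auto
        qed
      qed
    }
    {
      assume h: "step1_one bf S E a c = Some True"
      show "nst a = nst c \<or> (card (nst a) = 1 \<and> card (nst c) = 1)"
      proof (cases "a \<in> S \<and> c \<in> S \<and> bf a S = bf c S \<and> bf a S > Min ((\<lambda>k. bf k S) ` S)")
        case True
        show ?thesis
        proof (rule ccontr)
          assume ne: "\<not> ?thesis"
          then have ne': "nst a \<noteq> nst c" by auto
          show False
          proof (cases "nst a \<subseteq> S")
            case True2: True
            then have "bf a S = Min ((\<lambda>k. bf k S) ` S)" using bf_full_min Sn True by auto
            then show False using True by auto
          next
            case False
            then show False using bf_diff[OF S _ _ ne' False] True by auto
          qed
        qed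
      next
        case False
        then have "step1_one bf S E a c = E a c \<or> step1_one bf S E a c = Some False"
          unfolding step1_one_def by auto
        then show ?thesis using h E ac unfolding sound_def by auto
      qed
    }
  qed
qed

lemma step1_symm: "symm E \<Longrightarrow> symm (step1_one bf S E)"
proof -
  assume E: "symm E"
  show ?thesis unfolding symm_def
  proof (intro allI)
    fix a c
    show "step1_one bf S E a c = step1_one bf S E c a"
    proof (cases "a \<in> S \<and> c \<in> S \<and> a \<noteq> c")
      case True
      then show ?thesis using E unfolding step1_one_def symm_def
        by (cases "bf a S = bf c S") auto
    next
      case False
      then show ?thesis using E unfolding step1_one_def symm_def by auto
    qed
  qed
qed

lemma step1_grow: "E a c \<noteq> None \<Longrightarrow> step1_one bf S E a c \<noteq> None"
  unfolding step1_one_def by auto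

lemma step1_set: "a \<in> S \<Longrightarrow> c \<in> S \<Longrightarrow> a \<noteq> c \<Longrightarrow> bf a S \<noteq> bf c S \<or> bf a S > Min ((\<lambda>k. bf k S) ` S)
  \<Longrightarrow> step1_one bf S E a c \<noteq> None"
  unfolding step1_one_def by auto

end

locale nl_alg = nl_setup +
  fixes ord1 ord2 :: "nat set list"
  assumes o1: "set ord1 = design n b sigma" and o2: "set ord2 = design n b sigma"
begin

definition E1 where "E1 = fold (step1_one bf) ord1 (\<lambda>_ _. None)"

lemma E1_ss: "sound E1 \<and> symm E1"
  unfolding E1_def
proof (rule fold_inv[where P="\<lambda>E. sound E \<and> symm E"])
  show "\<forall>x\<in>set ord1. \<forall>E. sound E \<and> symm E \<longrightarrow> sound (step1_one bf x E) \<and> symm (step1_one bf x E)"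
    using o1 step1_sound step1_symm by auto
  show "sound (\<lambda>_ _. None) \<and> symm (\<lambda>_ _. None)" unfolding sound_def symm_def by auto
qed

lemma E1_set: "S \<in> design n b sigma \<Longrightarrow> a \<in> S \<Longrightarrow> c \<in> S \<Longrightarrow> a \<noteq> c \<Longrightarrow>
   bf a S \<noteq> bf c S \<or> bf a S > Min ((\<lambda>k. bf k S) ` S) \<Longrightarrow> E1 a c \<noteq> None"
  unfolding E1_def
  apply (rule fold_Q[where P="\<lambda>_. True" and xz=S and Q="\<lambda>E. E a c \<noteq> None"])
  using o1 step1_grow step1_set by auto

lemma sep1: "a \<in> {1..n} \<Longrightarrow> c \<in> {1..n} \<Longrightarrow> nst a \<noteq> nst c \<Longrightarrow> card (nst a) \<noteq> 1 \<Longrightarrow>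
   \<exists>p\<in>nst a. E1 p c \<noteq> None"
proof -
  assume a: "a \<in> {1..n}" "c \<in> {1..n}" "nst a \<noteq> nst c" "card (nst a) \<noteq> 1"
  obtain a' where a': "a' \<in> nst a" "a' \<noteq> a" using other_in_nest[OF a(1) a(4)] by blast
  have Na: "nst a \<in> Ns" "a \<in> nst a" using nest_in[OF a(1)] by auto
  have a'n: "a' \<in> {1..n}" using Ns_sub[OF Na(1)] a'(1) by blast
  have na': "nst a' = nst a" using same_nest[OF a(1) a'(1)] .
  obtain l where l: "l \<in> {1..numL b n}" "sigma a l \<noteq> sigma a' l"
    using digit_diff[OF a(1) a'n a'(2)[symmetric]] by blast
  show ?thesis
  proof (cases "sigma c l = sigma a' l")
    case False
    define S where "S = Sdig n sigma l (sigma a' l)"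
    have S: "S \<in> design n b sigma" unfolding S_def using Sdig_in[OF l(1) digit_lt[OF a'n l(1)]] .
    have m: "a \<in> S" "c \<in> S" "a' \<notin> S" unfolding S_def Sdig_mem using a l False a'n by auto
    have "\<not> nst a \<subseteq> S" using m a' by auto
    then have "bf a S \<noteq> bf c S" using bf_diff[OF S m(1) m(2) a(3)] by auto
    moreover have ac: "a \<noteq> c" using a(3) by auto
    ultimately have "E1 a c \<noteq> None" using E1_set[OF S m(1) m(2) ac] by blast
    then show ?thesis using Na by auto
  next
    case True
    define S where "S = Sdig n sigma l (sigma a l)"
    have S: "S \<in> design n b sigma" unfolding S_def using Sdig_in[OF l(1) digit_lt[OF a(1) l(1)]] .
    have m: "a' \<in> S" "c \<in> S" "a \<notin> S" unfolding S_def Sdig_mem using a l True a'n by auto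
    have "\<not> nst a' \<subseteq> S" using m Na na' by auto
    moreover have "nst a' \<noteq> nst c" using na' a by auto
    ultimately have "bf a' S \<noteq> bf c S" using bf_diff[OF S m(1) m(2)] by auto
    moreover have "a' \<noteq> c" using \<open>nst a' \<noteq> nst c\<close> by auto
    ultimately have "E1 a' c \<noteq> None" using E1_set[OF S m(1) m(2)] by blast
    then show ?thesis using a' by auto
  qed
qed

definition INV where "INV E \<longleftrightarrow> sound E \<and> symm E \<and> (\<forall>p q. E1 p q \<noteq> None \<longrightarrow> E p q \<noteq> None)"

lemma sep_zero: "INV E \<Longrightarrow> a \<in> {1..n} \<Longrightarrow> c \<in> {1..n} \<Longrightarrow> nst a \<noteq> nst c \<Longrightarrow> card (nst a) \<noteq> 1 \<Longrightarrow>
   \<exists>p\<in>nst a. p \<in> {1..n} \<and> p \<noteq> c \<and> nst p = nst a \<and> E p c = Some False"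
proof -
  assume E: "INV E" and a: "a \<in> {1..n}" "c \<in> {1..n}" "nst a \<noteq> nst c" "card (nst a) \<noteq> 1"
  obtain p where p: "p \<in> nst a" "E1 p c \<noteq> None" using sep1[OF a] by blast
  have pn: "p \<in> {1..n}" using Ns_sub[of "nst a"] nest_in[OF a(1)] p(1) by blast
  have np: "nst p = nst a" using same_nest[OF a(1) p(1)] .
  have pc: "p \<noteq> c" using np a(3) by metis
  have "E p c \<noteq> None" using E p(2) unfolding INV_def by blast
  moreover have "sound E" using E unfolding INV_def by simp
  ultimately have "E p c = Some False" using sound_false[of E p c] pn a(2) pc np a(3) a(4) by simp
  then show ?thesis using p pn pc np by auto
qed

lemma M_partial: "S \<in> design n b sigma \<Longrightarrow> x \<in> minBF bf S \<Longrightarrow> \<not> nst x \<subseteq> S \<Longrightarrow> m \<in> minBF bf S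
   \<Longrightarrow> nst m = nst x"
proof -
  assume a: "S \<in> design n b sigma" "x \<in> minBF bf S" "\<not> nst x \<subseteq> S" "m \<in> minBF bf S"
  have "x \<in> S" "m \<in> S" "bf m S = bf x S" using a(2,4) unfolding minBF_def by auto
  then show ?thesis using bf_eq_partial[OF a(1) _ _ a(3)] by blast
qed

lemma M_full: "S \<in> design n b sigma \<Longrightarrow> x \<in> S \<Longrightarrow> nst x \<subseteq> S \<Longrightarrow> x \<in> minBF bf S"
proof -
  assume a: "S \<in> design n b sigma" "x \<in> S" "nst x \<subseteq> S"
  have "bf x S = Min ((\<lambda>k. bf k S) ` S)" using bf_full_min[OF design_sub[OF a(1)] a(2) a(3)] .
  then show ?thesis unfolding minBF_def using a(2) by blast
qed

lemma sound_update:
  assumes "sound E"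
    and "\<And>a c. a \<in> {1..n} \<Longrightarrow> c \<in> {1..n} \<Longrightarrow> a \<noteq> c \<Longrightarrow>
      E' a c = E a c \<or> (E' a c = Some False \<and> nst a \<noteq> nst c) \<or>
      (E' a c = Some True \<and> (nst a = nst c \<or> (card (nst a) = 1 \<and> card (nst c) = 1)))"
  shows "sound E'"
  unfolding sound_def
proof (intro ballI impI)
  fix a c assume ac: "a \<in> {1..n}" "c \<in> {1..n}" "a \<noteq> c"
  have s: "(E a c = Some False \<longrightarrow> nst a \<noteq> nst c) \<and>
     (E a c = Some True \<longrightarrow> nst a = nst c \<or> (card (nst a) = 1 \<and> card (nst c) = 1))"
    using assms(1) ac unfolding sound_def by blast
  show "(E' a c = Some False \<longrightarrow> nst a \<noteq> nst c) \<and>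
     (E' a c = Some True \<longrightarrow> nst a = nst c \<or> (card (nst a) = 1 \<and> card (nst c) = 1))"
    using assms(2)[OF ac] s by fastforce
qed

lemma sound_F: "sound E \<Longrightarrow> a \<in> {1..n} \<Longrightarrow> c \<in> {1..n} \<Longrightarrow> a \<noteq> c \<Longrightarrow> E a c = Some False \<Longrightarrow> nst a \<noteq> nst c"
  unfolding sound_def by blast

lemma step2_sound: "S \<in> design n b sigma \<Longrightarrow> INV E \<Longrightarrow> sound (step2_one n bf S E)"
proof -
  assume S: "S \<in> design n b sigma" and E: "INV E"
  have Sn: "S \<subseteq> {1..n}" using design_sub S by auto
  define M where "M = minBF bf S"
  have MS: "M \<subseteq> S" unfolding M_def minBF_def by auto
  have sE: "sound E" using E unfolding INV_def by auto
  show ?thesis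
  proof (cases "\<exists>i\<in>M. \<exists>j\<in>M. i \<noteq> j \<and> E i j = Some False")
    case True
    then obtain i0 j0 where ij: "i0 \<in> M" "j0 \<in> M" "i0 \<noteq> j0" "E i0 j0 = Some False" by blast
    have full: "nst x \<subseteq> S" if x: "x \<in> M" for x
    proof (rule ccontr)
      assume nx: "\<not> nst x \<subseteq> S"
      have "nst i0 = nst x" using M_partial[OF S x[unfolded M_def] nx ij(1)[unfolded M_def]] .
      moreover have "nst j0 = nst x" using M_partial[OF S x[unfolded M_def] nx ij(2)[unfolded M_def]] .
      moreover have "nst i0 \<noteq> nst j0" using sound_F[OF sE _ _ ij(3) ij(4)] ij(1,2) MS Sn by blast
      ultimately show False by simp
    qed
    have st: "step2_one n bf S E = (\<lambda>a c. if (a \<in> M \<and> c \<in> {1..n} - S) \<or> (c \<in> M \<and> a \<in> {1..n} - S) then Some False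
               else E a c)" unfolding step2_one_def M_def[symmetric] Let_def using True by auto
    have diff: "nst a \<noteq> nst c" if "a \<in> M" "c \<in> {1..n} - S" for a c
    proof
      assume eq: "nst a = nst c"
      have "c \<in> nst c" using nest_in[of c] that(2) by blast
      then have "c \<in> nst a" using eq by simp
      then show False using full[OF that(1)] that(2) by blast
    qed
    show ?thesis
    proof (rule sound_update[OF sE])
      fix a c assume ac: "a \<in> {1..n}" "c \<in> {1..n}" "a \<noteq> c"
      show "step2_one n bf S E a c = E a c \<or> (step2_one n bf S E a c = Some False \<and> nst a \<noteq> nst c) \<or>
        (step2_one n bf S E a c = Some True \<and> (nst a = nst c \<or> (card (nst a) = 1 \<and> card (nst c) = 1)))"
      proof (cases "(a \<in> M \<and> c \<in> {1..n} - S) \<or> (c \<in> M \<and> a \<in> {1..n} - S)")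
        case True
        then have "nst a \<noteq> nst c" using diff by metis
        then show ?thesis unfolding st using True by simp
      next
        case False
        show ?thesis unfolding st by (rule disjI1, rule if_not_P[OF False])
      qed
    qed
  next
    case False
    have st: "step2_one n bf S E = (\<lambda>a c. if a \<in> M \<and> c \<in> M \<and> a \<noteq> c then Some True else E a c)"
      unfolding step2_one_def M_def[symmetric] Let_def using False by auto
    have ok: "nst a = nst c \<or> (card (nst a) = 1 \<and> card (nst c) = 1)" if ac: "a \<in> M" "c \<in> M" "a \<noteq> c" for a c
    proof (rule ccontr)
      assume ne: "\<not> (nst a = nst c \<or> (card (nst a) = 1 \<and> card (nst c) = 1))"
      then have ne': "nst a \<noteq> nst c" by blast
      have fa: "nst a \<subseteq> S"
      proof (rule ccontr)
        assume "\<not> nst a \<subseteq> S"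
        then have "nst c = nst a" using M_partial[OF S ac(1)[unfolded M_def] _ ac(2)[unfolded M_def]] by blast
        then show False using ne' by simp
      qed
      have fc: "nst c \<subseteq> S"
      proof (rule ccontr)
        assume "\<not> nst c \<subseteq> S"
        then have "nst a = nst c" using M_partial[OF S ac(2)[unfolded M_def] _ ac(1)[unfolded M_def]] by blast
        then show False using ne' by simp
      qed
      have an: "a \<in> {1..n}" "c \<in> {1..n}" using ac(1,2) MS Sn by auto
      show False
      proof (cases "card (nst a) \<noteq> 1")
        case True
        obtain p where p: "p \<in> nst a" "p \<in> {1..n}" "p \<noteq> c" "nst p = nst a" "E p c = Some False"
          using sep_zero[OF E an ne' True] by blast
        have "p \<in> S" using p(1) fa by blast
        then have "p \<in> M" unfolding M_def using M_full[OF S] p(4) fa by simp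
        then show False using False ac(2) p(3) p(5) by blast
      next
        case c1: False
        then have c2: "card (nst c) \<noteq> 1" using ne by blast
        obtain p where p: "p \<in> nst c" "p \<in> {1..n}" "p \<noteq> a" "nst p = nst c" "E p a = Some False"
          using sep_zero[OF E an(2) an(1) ne'[symmetric] c2] by blast
        have "p \<in> S" using p(1) fc by blast
        then have "p \<in> M" unfolding M_def using M_full[OF S] p(4) fc by simp
        then show False using False ac(1) p(3) p(5) by blast
      qed
    qed
    show ?thesis
    proof (rule sound_update[OF sE])
      fix a c assume ac: "a \<in> {1..n}" "c \<in> {1..n}" "a \<noteq> c"
      show "step2_one n bf S E a c = E a c \<or> (step2_one n bf S E a c = Some False \<and> nst a \<noteq> nst c) \<or>
        (step2_one n bf S E a c = Some True \<and> (nst a = nst c \<or> (card (nst a) = 1 \<and> card (nst c) = 1)))"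
      proof (cases "a \<in> M \<and> c \<in> M \<and> a \<noteq> c")
        case True
        then have "nst a = nst c \<or> (card (nst a) = 1 \<and> card (nst c) = 1)" using ok by blast
        then show ?thesis unfolding st using True by simp
      next
        case False
        show ?thesis unfolding st by (rule disjI1, rule if_not_P[OF False])
      qed
    qed
  qed
qed

lemma step2_symm: "symm E \<Longrightarrow> symm (step2_one n bf S E)"
  unfolding symm_def step2_one_def Let_def by auto

lemma step2_grow: "E a c \<noteq> None \<Longrightarrow> step2_one n bf S E a c \<noteq> None"
  unfolding step2_one_def Let_def by auto

lemma step2_INV: "S \<in> design n b sigma \<Longrightarrow> INV E \<Longrightarrow> INV (step2_one n bf S E)"
  using step2_sound step2_symm step2_grow unfolding INV_def by blast

definition E2 where "E2 = fold (step2_one n bf) ord2 E1"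

lemma INV_E1: "INV E1" unfolding INV_def using E1_ss by auto

lemma INV_E2: "INV E2"
  unfolding E2_def by (rule fold_inv[where P=INV]) (use o2 step2_INV INV_E1 in auto)

lemma E2_grow: "E1 p q \<noteq> None \<Longrightarrow> E2 p q \<noteq> None"
  using INV_E2 unfolding INV_def by blast

lemma sound_E2: "sound E2" using INV_E2 unfolding INV_def by blast
lemma symm_E2: "symm E2" using INV_E2 unfolding INV_def by blast

lemma E2_at:
  assumes "S \<in> design n b sigma" and "\<And>E. INV E \<Longrightarrow> Q (step2_one n bf S E)"
    and "\<And>E E'. (\<forall>p q. E p q \<noteq> None \<longrightarrow> E' p q \<noteq> None) \<Longrightarrow> Q E \<Longrightarrow> Q E'"
  shows "Q E2"
  unfolding E2_def
proof (rule fold_Q[where P=INV and xz=S])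
  show "\<forall>x\<in>set ord2. \<forall>E. INV E \<longrightarrow> INV (step2_one n bf x E)" using o2 step2_INV by blast
  show "\<forall>x\<in>set ord2. \<forall>E. INV E \<longrightarrow> Q E \<longrightarrow> Q (step2_one n bf x E)"
  proof (intro ballI allI impI)
    fix x E assume q: "Q E"
    have g: "\<forall>p q. E p q \<noteq> None \<longrightarrow> step2_one n bf x E p q \<noteq> None" using step2_grow by blast
    show "Q (step2_one n bf x E)" by (rule assms(3)[OF g q])
  qed
  show "S \<in> set ord2" using o2 assms(1) by simp
  show "\<forall>E. INV E \<longrightarrow> Q (step2_one n bf S E)" using assms(2) by blast
  show "INV E1" by (rule INV_E1)
qed

lemma E2_A: "S \<in> design n b sigma \<Longrightarrow> i \<in> S \<Longrightarrow> j \<in> S \<Longrightarrow> i \<noteq> j \<Longrightarrow> nst i = nst j \<Longrightarrow> \<not> nst i \<subseteq> S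
  \<Longrightarrow> E2 i j = Some True"
proof -
  assume S: "S \<in> design n b sigma" and ij: "i \<in> S" "j \<in> S" "i \<noteq> j" "nst i = nst j" and p: "\<not> nst i \<subseteq> S"
  have Sn: "S \<subseteq> {1..n}" using design_sub[OF S] .
  have ijn: "i \<in> {1..n}" "j \<in> {1..n}" using ij(1,2) Sn by auto
  have "E2 i j \<noteq> None"
  proof (cases "bf i S > Min ((\<lambda>k. bf k S) ` S)")
    case True
    then have "E1 i j \<noteq> None" using E1_set[OF S ij(1,2,3)] by blast
    then show ?thesis using E2_grow by blast
  next
    case False
    then have bi: "bf i S = Min ((\<lambda>k. bf k S) ` S)" using bf_min_le[OF Sn ij(1)] by linarith
    have bj: "bf j S = bf i S" using bf_same[OF ij(2) ij(1) Sn ij(4)[symmetric]] .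
    have iM: "i \<in> minBF bf S" unfolding minBF_def using ij(1) bi by blast
    have jM: "j \<in> minBF bf S" unfolding minBF_def using ij(2) bi bj by simp
    show ?thesis
    proof (rule E2_at[OF S, where Q="\<lambda>E. E i j \<noteq> None"])
      fix E assume E: "INV E"
      have sE: "sound E" using E unfolding INV_def by blast
      have nz: "\<not> (\<exists>a\<in>minBF bf S. \<exists>c\<in>minBF bf S. a \<noteq> c \<and> E a c = Some False)"
      proof
        assume "\<exists>a\<in>minBF bf S. \<exists>c\<in>minBF bf S. a \<noteq> c \<and> E a c = Some False"
        then obtain a c where ac: "a \<in> minBF bf S" "c \<in> minBF bf S" "a \<noteq> c" "E a c = Some False" by blast
        have "nst a = nst i" using M_partial[OF S iM p ac(1)] .
        moreover have "nst c = nst i" using M_partial[OF S iM p ac(2)] .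
        moreover have "a \<in> {1..n}" "c \<in> {1..n}" using ac(1,2) Sn unfolding minBF_def by auto
        ultimately show False using sound_F[OF sE _ _ ac(3) ac(4)] by simp
      qed
      have "step2_one n bf S E i j = Some True"
        unfolding step2_one_def Let_def if_not_P[OF nz] using iM jM ij(3) by simp
      then show "step2_one n bf S E i j \<noteq> None" by simp
    next
      fix E E' :: emat assume "\<forall>p q. E p q \<noteq> None \<longrightarrow> E' p q \<noteq> None" "E i j \<noteq> None"
      then show "E' i j \<noteq> None" by blast
    qed
  qed
  then show ?thesis using sound_true[OF sound_E2 ijn ij(3) ij(4)] by blast
qed

lemma E2_C: "i \<in> {1..n} \<Longrightarrow> k \<in> nst i \<Longrightarrow> k \<noteq> i \<Longrightarrow> nst i \<subseteq> {i, k} \<Longrightarrow> x \<in> {1..n} \<Longrightarrow> x \<notin> nst i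
  \<Longrightarrow> E2 i k = Some True \<or> E2 i x = Some False"
proof -
  assume i: "i \<in> {1..n}" and k: "k \<in> nst i" "k \<noteq> i" and N2: "nst i \<subseteq> {i, k}"
    and x: "x \<in> {1..n}" "x \<notin> nst i"
  have Ni: "nst i \<in> Ns" "i \<in> nst i" using nest_in[OF i] by auto
  have kn: "k \<in> {1..n}" using Ns_sub[OF Ni(1)] k(1) by blast
  have nk: "nst k = nst i" using same_nest[OF i k(1)] .
  have xi: "x \<noteq> i" using x(2) Ni(2) by blast
  have xk: "x \<noteq> k" using x(2) k(1) by blast
  have nx: "nst x \<noteq> nst i"
  proof
    assume "nst x = nst i"
    moreover have "x \<in> nst x" using nest_in[OF x(1)] by blast
    ultimately show False using x(2) by simp
  qed
  have c1: "card (nst i) \<noteq> 1"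
  proof
    assume "card (nst i) = 1"
    then show False using card1_eq[OF i _ k(1)] k(2) by blast
  qed
  show ?thesis
  proof (cases "\<exists>l\<in>{1..numL b n}. sigma i l \<noteq> sigma k l \<and> sigma x l \<noteq> sigma k l")
    case True
    then obtain l where l: "l \<in> {1..numL b n}" "sigma i l \<noteq> sigma k l" "sigma x l \<noteq> sigma k l" by blast
    define S where "S = Sdig n sigma l (sigma k l)"
    have S: "S \<in> design n b sigma" unfolding S_def using Sdig_in[OF l(1) digit_lt[OF kn l(1)]] .
    have m: "i \<in> S" "x \<in> S" "k \<notin> S" unfolding S_def Sdig_mem using i x(1) l by auto
    have "\<not> nst i \<subseteq> S" using m(3) k(1) by blast
    then have "bf i S \<noteq> bf x S" using bf_diff[OF S m(1) m(2) nx[symmetric]] by blast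
    then have "E1 i x \<noteq> None" using E1_set[OF S m(1) m(2) xi[symmetric]] by blast
    then have "E2 i x \<noteq> None" using E2_grow by blast
    then have "E2 i x = Some False" using sound_false[OF sound_E2 i x(1) xi[symmetric] nx[symmetric]] c1 by blast
    then show ?thesis by blast
  next
    case False
    obtain l where l: "l \<in> {1..numL b n}" "sigma x l \<noteq> sigma k l" using digit_diff[OF x(1) kn xk] by blast
    have il: "sigma i l = sigma k l" using False l by blast
    define S where "S = Sdig n sigma l (sigma x l)"
    have S: "S \<in> design n b sigma" unfolding S_def using Sdig_in[OF l(1) digit_lt[OF x(1) l(1)]] .
    have m: "i \<in> S" "k \<in> S" "x \<notin> S" unfolding S_def Sdig_mem using i kn l il by auto
    have full: "nst i \<subseteq> S" using N2 m by blast
    have iM: "i \<in> minBF bf S" using M_full[OF S m(1) full] .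
    have kM: "k \<in> minBF bf S" using M_full[OF S m(2)] full nk by simp
    have "E2 i k \<noteq> None \<or> E2 i x \<noteq> None"
    proof (rule E2_at[OF S, where Q="\<lambda>E. E i k \<noteq> None \<or> E i x \<noteq> None"])
      fix E assume E: "INV E"
      show "step2_one n bf S E i k \<noteq> None \<or> step2_one n bf S E i x \<noteq> None"
      proof (cases "\<exists>a\<in>minBF bf S. \<exists>c\<in>minBF bf S. a \<noteq> c \<and> E a c = Some False")
        case True
        have "step2_one n bf S E i x = Some False"
          unfolding step2_one_def Let_def if_P[OF True] using iM x(1) m(3) by simp
        then show ?thesis by simp
      next
        case False
        have "step2_one n bf S E i k = Some True"
          unfolding step2_one_def Let_def if_not_P[OF False] using iM kM k(2) by simp
        then show ?thesis by simp
      qed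
    next
      fix E E' :: emat assume "\<forall>p q. E p q \<noteq> None \<longrightarrow> E' p q \<noteq> None" "E i k \<noteq> None \<or> E i x \<noteq> None"
      then show "E' i k \<noteq> None \<or> E' i x \<noteq> None" by blast
    qed
    then show ?thesis
    proof
      assume "E2 i k \<noteq> None"
      then show ?thesis using sound_true[OF sound_E2 i kn k(2)[symmetric] nk[symmetric]] by blast
    next
      assume "E2 i x \<noteq> None"
      then show ?thesis using sound_false[OF sound_E2 i x(1) xi[symmetric] nx[symmetric]] c1 by blast
    qed
  qed
qed

lemma step3_keep: "E a c \<noteq> None \<Longrightarrow> step3 n E a c = E a c"
  unfolding step3_def by auto

lemma step3_symm: "symm E \<Longrightarrow> symm (step3 n E)"
proof -
  assume E: "symm E"
  show ?thesis unfolding symm_def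
  proof (intro allI)
    fix a c
    have e: "E a c = E c a" using E unfolding symm_def by blast
    have "(\<exists>k\<in>{1..n}. k \<noteq> a \<and> k \<noteq> c \<and> E a k = Some True \<and> E c k = Some True) \<longleftrightarrow>
          (\<exists>k\<in>{1..n}. k \<noteq> c \<and> k \<noteq> a \<and> E c k = Some True \<and> E a k = Some True)" by blast
    then show "step3 n E a c = step3 n E c a" unfolding step3_def using e by auto
  qed
qed

lemma step3_sound: "sound E \<Longrightarrow> sound (step3 n E)"
proof -
  assume sE: "sound E"
  show ?thesis
  proof (rule sound_update[OF sE])
    fix a c assume ac: "a \<in> {1..n}" "c \<in> {1..n}" "a \<noteq> c"
    show "step3 n E a c = E a c \<or> (step3 n E a c = Some False \<and> nst a \<noteq> nst c) \<or>
        (step3 n E a c = Some True \<and> (nst a = nst c \<or> (card (nst a) = 1 \<and> card (nst c) = 1)))"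
    proof (cases "E a c = None \<and> (\<exists>k\<in>{1..n}. k \<noteq> a \<and> k \<noteq> c \<and> E a k = Some True \<and> E c k = Some True)")
      case True
      then obtain k where k: "k \<in> {1..n}" "k \<noteq> a" "k \<noteq> c" "E a k = Some True" "E c k = Some True" by blast
      have s1: "nst a = nst k \<or> (card (nst a) = 1 \<and> card (nst k) = 1)"
        using sE ac(1) k(1) k(2) k(4) unfolding sound_def by metis
      have s2: "nst c = nst k \<or> (card (nst c) = 1 \<and> card (nst k) = 1)"
        using sE ac(2) k(1) k(3) k(5) unfolding sound_def by metis
      have ak: "a \<in> nst a" "c \<in> nst c" using nest_in ac(1,2) by auto
      have "nst a = nst c \<or> (card (nst a) = 1 \<and> card (nst c) = 1)"
      proof (cases "card (nst k) = 1")
        case True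
        have "nst a \<noteq> nst k"
        proof
          assume "nst a = nst k"
          then show False using card1_eq[OF k(1) True, of a] ak(1) k(2) by simp
        qed
        moreover have "nst c \<noteq> nst k"
        proof
          assume "nst c = nst k"
          then show False using card1_eq[OF k(1) True, of c] ak(2) k(3) by simp
        qed
        ultimately show ?thesis using s1 s2 by blast
      next
        case False
        then show ?thesis using s1 s2 by simp
      qed
      moreover have "step3 n E a c = Some True" unfolding step3_def if_P[OF conjI[OF ac(1) conjI[OF ac(2) conjI[OF ac(3) True]]]] ..
      ultimately show ?thesis by blast
    next
      case False
      have "step3 n E a c = E a c" unfolding step3_def using False by auto
      then show ?thesis by blast
    qed
  qed
qed

definition E3 where "E3 = step3 n E2"

lemma sound_E3: "sound E3" unfolding E3_def using step3_sound sound_E2 by blast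
lemma symm_E3: "symm E3" unfolding E3_def using step3_symm symm_E2 by blast
lemma E3_keep: "E2 a c \<noteq> None \<Longrightarrow> E3 a c = E2 a c" unfolding E3_def using step3_keep by blast

lemma E3_big: "i \<in> {1..n} \<Longrightarrow> j \<in> nst i \<Longrightarrow> k \<in> nst i \<Longrightarrow> i \<noteq> j \<Longrightarrow> i \<noteq> k \<Longrightarrow> j \<noteq> k
  \<Longrightarrow> E3 i j = Some True"
proof -
  assume i: "i \<in> {1..n}" and jk: "j \<in> nst i" "k \<in> nst i" "i \<noteq> j" "i \<noteq> k" "j \<noteq> k"
  have Ni: "nst i \<in> Ns" "i \<in> nst i" using nest_in[OF i] by auto
  have jn: "j \<in> {1..n}" using Ns_sub[OF Ni(1)] jk(1) by blast
  have kn: "k \<in> {1..n}" using Ns_sub[OF Ni(1)] jk(2) by blast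
  have nj: "nst j = nst i" using same_nest[OF i jk(1)] .
  have nk: "nst k = nst i" using same_nest[OF i jk(2)] .
  show ?thesis
  proof (cases "\<exists>l\<in>{1..numL b n}. sigma k l \<noteq> sigma i l \<and> sigma k l \<noteq> sigma j l")
    case True
    then obtain l where l: "l \<in> {1..numL b n}" "sigma k l \<noteq> sigma i l" "sigma k l \<noteq> sigma j l" by blast
    define S where "S = Sdig n sigma l (sigma k l)"
    have S: "S \<in> design n b sigma" unfolding S_def using Sdig_in[OF l(1) digit_lt[OF kn l(1)]] .
    have m: "i \<in> S" "j \<in> S" "k \<notin> S" unfolding S_def Sdig_mem using i jn l by auto
    have "\<not> nst i \<subseteq> S" using m(3) jk(2) by blast
    then have "E2 i j = Some True" using E2_A[OF S m(1) m(2) jk(3) nj[symmetric]] by blast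
    then show ?thesis by (simp add: E3_keep)
  next
    case False
    obtain l where l: "l \<in> {1..numL b n}" "sigma k l \<noteq> sigma j l" using digit_diff[OF kn jn jk(5)[symmetric]] by blast
    have kl: "sigma k l = sigma i l" using False l by blast
    define S where "S = Sdig n sigma l (sigma j l)"
    have S: "S \<in> design n b sigma" unfolding S_def using Sdig_in[OF l(1) digit_lt[OF jn l(1)]] .
    have m: "i \<in> S" "k \<in> S" "j \<notin> S" unfolding S_def Sdig_mem using i kn l kl by auto
    have "\<not> nst i \<subseteq> S" using m(3) jk(1) by blast
    then have e1: "E2 i k = Some True" using E2_A[OF S m(1) m(2) jk(4) nk[symmetric]] by blast
    obtain l' where l': "l' \<in> {1..numL b n}" "sigma k l' \<noteq> sigma i l'" using digit_diff[OF kn i jk(4)[symmetric]] by blast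
    have kl': "sigma k l' = sigma j l'" using False l' by blast
    define S' where "S' = Sdig n sigma l' (sigma i l')"
    have S': "S' \<in> design n b sigma" unfolding S'_def using Sdig_in[OF l'(1) digit_lt[OF i l'(1)]] .
    have m': "j \<in> S'" "k \<in> S'" "i \<notin> S'" unfolding S'_def Sdig_mem using jn kn l' kl' by auto
    have nj': "nst j = nst k" using nj nk by simp
    have "\<not> nst j \<subseteq> S'" using m'(3) Ni(2) nj by blast
    then have e2: "E2 j k = Some True" using E2_A[OF S' m'(1) m'(2) jk(5) nj'] by blast
    show ?thesis
    proof (cases "E2 i j = None")
      case True
      have "\<exists>k\<in>{1..n}. k \<noteq> i \<and> k \<noteq> j \<and> E2 i k = Some True \<and> E2 j k = Some True"
        using kn jk(4,5) e1 e2 by (intro bexI[of _ k]) auto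
      then show ?thesis unfolding E3_def step3_def using True i jn jk(3) by simp
    next
      case False
      then have "E2 i j = Some True" using sound_true[OF sound_E2 i jn jk(3) nj[symmetric]] by blast
      then show ?thesis by (simp add: E3_keep)
    qed
  qed
qed

lemma witness: "i \<in> {1..n} \<Longrightarrow> j \<in> {1..n} \<Longrightarrow> nst j \<noteq> nst i \<Longrightarrow> card (nst i) \<noteq> 1 \<Longrightarrow> E3 i j = None
  \<Longrightarrow> \<exists>k\<in>{1..n}. k \<noteq> i \<and> k \<noteq> j \<and> E3 i k = Some True"
proof -
  assume i: "i \<in> {1..n}" and j: "j \<in> {1..n}" and nij: "nst j \<noteq> nst i" and c: "card (nst i) \<noteq> 1"
    and E: "E3 i j = None"
  obtain k where k: "k \<in> nst i" "k \<noteq> i" using other_in_nest[OF i c] by blast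
  have Ni: "nst i \<in> Ns" "i \<in> nst i" using nest_in[OF i] by auto
  have kn: "k \<in> {1..n}" using Ns_sub[OF Ni(1)] k(1) by blast
  have jN: "j \<notin> nst i"
  proof
    assume "j \<in> nst i"
    then have "nst j = nst i" using same_nest[OF i] by blast
    then show False using nij by blast
  qed
  have kj: "k \<noteq> j" using k(1) jN by blast
  show ?thesis
  proof (cases "\<exists>k'\<in>nst i. k' \<noteq> i \<and> k' \<noteq> k")
    case True
    then obtain k' where k': "k' \<in> nst i" "k' \<noteq> i" "k' \<noteq> k" by blast
    have "E3 i k = Some True" using E3_big[OF i k(1) k'(1) k(2)[symmetric] k'(2)[symmetric] k'(3)[symmetric]] .
    then show ?thesis using kn k(2) kj by blast
  next
    case False
    then have N2: "nst i \<subseteq> {i, k}" by blast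
    have "E2 i k = Some True \<or> E2 i j = Some False" using E2_C[OF i k(1) k(2) N2 j jN] .
    then show ?thesis
    proof
      assume "E2 i k = Some True"
      then have "E3 i k = Some True" by (simp add: E3_keep)
      then show ?thesis using kn k(2) kj by blast
    next
      assume "E2 i j = Some False"
      then have "E3 i j = Some False" by (simp add: E3_keep)
      then show ?thesis using E by simp
    qed
  qed
qed

lemma alg_eq: "algorithm2 n bf ord1 ord2 = step5 n (step4 n E3)"
  unfolding algorithm2_def Let_def E3_def E2_def E1_def by simp

lemma final: "i \<in> {1..n} \<Longrightarrow> j \<in> {1..n} \<Longrightarrow> i \<noteq> j \<Longrightarrow>
   (let E = algorithm2 n bf ord1 ord2 in
            if card (nst i) = 1 \<and> card (nst j) = 1
            then E i j = Some False \<or> E i j = Some True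
            else E i j = Some (nst i = nst j))"
proof -
  assume i: "i \<in> {1..n}" and j: "j \<in> {1..n}" and ij: "i \<noteq> j"
  define E4 where "E4 = step4 n E3"
  have E5: "algorithm2 n bf ord1 ord2 i j = (if E4 i j = None then Some False else E4 i j)"
    unfolding alg_eq E4_def[symmetric] step5_def using i j ij by simp
  have keep4: "E4 i j = E3 i j" if "E3 i j \<noteq> None"
    unfolding E4_def step4_def using that by simp
  show ?thesis
  proof (cases "card (nst i) = 1 \<and> card (nst j) = 1")
    case True
    have "algorithm2 n bf ord1 ord2 i j \<noteq> None" unfolding E5 by auto
    then have "algorithm2 n bf ord1 ord2 i j = Some False \<or> algorithm2 n bf ord1 ord2 i j = Some True"
      by (metis (full_types) option.exhaust)
    then show ?thesis using True by (simp add: Let_def)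
  next
    case ns: False
    have "algorithm2 n bf ord1 ord2 i j = Some (nst i = nst j)"
    proof (cases "nst i = nst j")
      case True
      have ci: "card (nst i) \<noteq> 1" using ns True by simp
      have Ni: "nst i \<in> Ns" "i \<in> nst i" using nest_in[OF i] by auto
      have jNi: "j \<in> nst i" using nest_in[OF j] True by simp
      have "E4 i j = Some True"
      proof (cases "\<exists>k\<in>nst i. k \<noteq> i \<and> k \<noteq> j")
        case True
        then obtain k where k: "k \<in> nst i" "k \<noteq> i" "k \<noteq> j" by blast
        have "E3 i j = Some True" using E3_big[OF i jNi k(1) ij k(2)[symmetric] k(3)[symmetric]] .
        then show ?thesis using keep4 by simp
      next
        case False
        show ?thesis
        proof (cases "E3 i j = None")
          case None: True
          have noT: "E3 i k \<noteq> Some True \<and> E3 j k \<noteq> Some True"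
            if k: "k \<in> {1..n}" "k \<noteq> i" "k \<noteq> j" for k
          proof
            have kk: "k \<in> nst k" using nest_in[OF k(1)] by blast
            show "E3 i k \<noteq> Some True"
            proof
              assume "E3 i k = Some True"
              then have "nst i = nst k \<or> (card (nst i) = 1 \<and> card (nst k) = 1)"
                using sound_E3 i k(1) k(2) unfolding sound_def by metis
              then have "nst k = nst i" using ci by metis
              then have "k \<in> nst i" using kk by simp
              then show False using False k(2,3) by blast
            qed
            show "E3 j k \<noteq> Some True"
            proof
              assume "E3 j k = Some True"
              then have "nst j = nst k \<or> (card (nst j) = 1 \<and> card (nst k) = 1)"
                using sound_E3 j k(1) k(3) unfolding sound_def by metis
              then have "nst k = nst i" using ci True by metis
              then have "k \<in> nst i" using kk by simp
              then show False using False k(2,3) by blast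
            qed
          qed
          have cond: "\<forall>k\<in>{1..n}. k \<noteq> i \<and> k \<noteq> j \<longrightarrow> E3 i k \<noteq> Some True \<and> E3 j k \<noteq> Some True"
            using noT by blast
          show ?thesis unfolding E4_def step4_def using None i j ij cond by simp
        next
          case nN: False
          then have "E3 i j = Some True" using sound_true[OF sound_E3 i j ij True] by blast
          then show ?thesis using keep4 by simp
        qed
      qed
      then show ?thesis unfolding E5 using True by simp
    next
      case nij: False
      have "E4 i j \<noteq> Some True"
      proof (cases "E3 i j = None")
        case None: True
        obtain k where k: "k \<in> {1..n}" "k \<noteq> i" "k \<noteq> j" "E3 i k = Some True \<or> E3 j k = Some True"
        proof (cases "card (nst i) \<noteq> 1")
          case True
          obtain k where "k \<in> {1..n}" "k \<noteq> i" "k \<noteq> j" "E3 i k = Some True"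
            using witness[OF i j _ True None] nij by metis
          then show ?thesis using that by blast
        next
          case False
          then have cj: "card (nst j) \<noteq> 1" using ns by simp
          have "E3 j i = None" using None symm_E3 unfolding symm_def by metis
          then obtain k where "k \<in> {1..n}" "k \<noteq> j" "k \<noteq> i" "E3 j k = Some True"
            using witness[OF j i _ cj] nij by metis
          then show ?thesis using that by blast
        qed
        have "\<not> (\<forall>k\<in>{1..n}. k \<noteq> i \<and> k \<noteq> j \<longrightarrow> E3 i k \<noteq> Some True \<and> E3 j k \<noteq> Some True)"
          using k by blast
        then have "E4 i j = None" unfolding E4_def step4_def using None by simp
        then show ?thesis by simp
      next
        case nN: False
        have c: "card (nst i) \<noteq> 1 \<or> card (nst j) \<noteq> 1" using ns by simp
        have "E3 i j = Some False" using sound_false[OF sound_E3 i j ij nij c nN] .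
        then show ?thesis using keep4 by simp
      qed
      then have "algorithm2 n bf ord1 ord2 i j = Some False" unfolding E5
        by (cases "E4 i j") auto
      then show ?thesis using nij by simp
    qed
    then show ?thesis using ns by (simp add: Let_def)
  qed
qed

end

theorem theorem4p8:
  fixes n b :: nat and sigma :: "nat \<Rightarrow> nat \<Rightarrow> nat"
    and Ns :: "nat set set" and v :: "nat \<Rightarrow> real"
    and lam vN :: "nat set \<Rightarrow> real"
    and ord1 ord2 :: "nat set list"
  assumes n2: "n \<ge> 2" and b2: "b \<ge> 2"
    and code: "valid_code n b sigma"
    and part: "partition_on {1..n} Ns"
    and vpos: "\<forall>i\<in>{1..n}. v i > 0"
    and lam_range: "\<forall>N\<in>Ns. 0 \<le> lam N \<and> lam N \<le> 1"
    and vNpos: "\<forall>N\<in>Ns. lam N = 0 \<longrightarrow> vN N > 0"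
    and A1: "\<forall>N\<in>Ns. lam N = 1 \<longleftrightarrow> card N = 1"
    and A2: "\<forall>S\<in>design n b sigma. \<forall>N\<in>Ns. \<forall>N'\<in>Ns.
               N \<noteq> N' \<and> N \<inter> S \<noteq> {} \<and> N \<inter> S \<noteq> N \<and> N' \<inter> S \<noteq> {} \<and> N' \<inter> S \<noteq> N'
               \<longrightarrow> Mult v lam N S \<noteq> Mult v lam N' S"
    and ord1: "distinct ord1" "set ord1 = design n b sigma"
    and ord2: "distinct ord2" "set ord2 = design n b sigma"
  shows "\<forall>i\<in>{1..n}. \<forall>j\<in>{1..n}. i \<noteq> j \<longrightarrow>
           (let E = algorithm2 n (BF n Ns v lam vN) ord1 ord2 in
            if card (nest_of Ns i) = 1 \<and> card (nest_of Ns j) = 1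
            then E i j = Some False \<or> E i j = Some True
            else E i j = Some (nest_of Ns i = nest_of Ns j))"
proof -
  interpret nl_alg n b sigma Ns v lam vN ord1 ord2
    by (unfold_locales) (use code part vpos lam_range vNpos A1 A2 ord1 ord2 in auto)
  show ?thesis using final by blast
qed

end
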